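(* For all positive integers $m_1,\dots,m_S$, $$B(m_1,\dots,m_S)=\sum_{\ell_1=0}^{m_1-1}\cdots\sum_{\ell_S=0}^{m_S-1}\frac{(\ell_1+\dots+\ell_S)!}{\ell_1!\cdots\ell_S!}.$$
   Context: For nonnegative integers $n_1,\dots,n_S$, $E(n_1,\dots,n_S)$ denotes the number of block derangements: $S$ players hold $n_1,\dots,n_S$ distinct cards respectively; all $N=n_1+\dots+n_S$ cards are redealt so that player $j$ again receives exactly $n_j$ cards (only which cards each player gets matters); $E$ counts the deals in which no player receives any card he originally held. Equivalently, $E(n_1,\dots,n_S)$ is the coefficient of $x_1^{n_1}\cdots x_S^{n_S}$ in $\prod_{j=1}^S(x_1+\dots+x_S-x_j)^{n_j}$. By convention $E(0,\dots,0)=1$. For positive integers $m_1,\dots,m_S$, $B(m_1,\dots,m_S)=\sum_{k_1=1}^{m_1}\cdots\sum_{k_S=1}^{m_S}\binom{m_1}{k_1}\cdots\binom{m_S}{k_S}E(k_1-1,\dots,k_S-1)$. *)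

theory Defs
  imports "HOL-Library.FuncSet" Complex_Main
begin

text \<open>Players are 0,...,S-1; player j holds n j cards, the cards are (j,c) with c < n j.\<close>
definition cards :: "nat \<Rightarrow> (nat \<Rightarrow> nat) \<Rightarrow> (nat \<times> nat) set" where
  "cards S n = {(j, c). j < S \<and> c < n j}"

definition block_derangements :: "nat \<Rightarrow> (nat \<Rightarrow> nat) \<Rightarrow> ((nat \<times> nat) \<Rightarrow> nat) set" where
  "block_derangements S n =
     {f \<in> cards S n \<rightarrow>\<^sub>E {..<S}.
        (\<forall>j<S. card {x \<in> cards S n. f x = j} = n j) \<and>
        (\<forall>x \<in> cards S n. f x \<noteq> fst x)}"

definition E :: "nat \<Rightarrow> (nat \<Rightarrow> nat) \<Rightarrow> nat" where
  "E S n = card (block_derangements S n)"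

definition B :: "nat \<Rightarrow> (nat \<Rightarrow> nat) \<Rightarrow> nat" where
  "B S m = (\<Sum>k \<in> Pi\<^sub>E {..<S} (\<lambda>j. {1..m j}).
              (\<Prod>j<S. m j choose k j) * E S (\<lambda>j. k j - 1))"

end

theory Submission
  imports Defs
begin

definition deals :: "nat \<Rightarrow> 'a set \<Rightarrow> (nat \<Rightarrow> nat) \<Rightarrow> ('a \<Rightarrow> nat) set" where
  "deals S D r = {f \<in> D \<rightarrow>\<^sub>E {..<S}. \<forall>j<S. card {x\<in>D. f x = j} = r j}"

lemma finite_deals: "finite D \<Longrightarrow> finite (deals S D r)"
  unfolding deals_def by (rule finite_subset[of _ "D \<rightarrow>\<^sub>E {..<S}"]) (auto intro: finite_PiE)

lemma deals_fiber_card: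
  assumes D: "finite D" and T: "T \<subseteq> D" "card T = r S"
  shows "card {f \<in> deals (Suc S) D r. {x\<in>D. f x = S} = T} = card (deals S (D - T) r)"
proof -
  let ?A = "{f \<in> deals (Suc S) D r. {x\<in>D. f x = S} = T}"
  let ?B = "deals S (D - T) r"
  have "bij_betw (\<lambda>f. restrict f (D - T)) ?A ?B"
  proof (rule bij_betw_byWitness[where f'="\<lambda>g x. if x \<in> T then S else g x"])
    show "\<forall>a\<in>?A. (\<lambda>x. if x \<in> T then S else restrict a (D - T) x) = a"
    proof
      fix f assume f: "f \<in> ?A"
      show "(\<lambda>x. if x \<in> T then S else restrict f (D - T) x) = f"
      proof
        fix x show "(if x \<in> T then S else restrict f (D - T) x) = f x"
          using f T by (auto simp: deals_def PiE_def extensional_def)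
      qed
    qed
    show "\<forall>g\<in>?B. restrict (\<lambda>x. if x \<in> T then S else g x) (D - T) = g"
      by (auto simp: deals_def PiE_def extensional_def)
    show "(\<lambda>f. restrict f (D - T)) ` ?A \<subseteq> ?B"
    proof
      fix g assume "g \<in> (\<lambda>f. restrict f (D - T)) ` ?A"
      then obtain f where f: "f \<in> ?A" and g: "g = restrict f (D - T)" by auto
      have fv: "\<And>x. x \<in> D \<Longrightarrow> f x < Suc S" and ff: "\<And>j. j < Suc S \<Longrightarrow> card {x\<in>D. f x = j} = r j"
        and fT: "{x\<in>D. f x = S} = T"
        using f by (auto simp: deals_def PiE_def)
      have "g \<in> (D - T) \<rightarrow>\<^sub>E {..<S}"
        using fv fT by (force simp: g)
      moreover have "\<forall>j<S. card {x\<in>D - T. g x = j} = r j"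
      proof (intro allI impI)
        fix j assume j: "j < S"
        have "{x\<in>D - T. g x = j} = {x\<in>D. f x = j}" using fT j by (auto simp: g)
        thus "card {x\<in>D - T. g x = j} = r j" using ff j by simp
      qed
      ultimately show "g \<in> ?B" by (simp add: deals_def)
    qed
    show "(\<lambda>g x. if x \<in> T then S else g x) ` ?B \<subseteq> ?A"
    proof
      fix h assume "h \<in> (\<lambda>g x. if x \<in> T then S else g x) ` ?B"
      then obtain g where g: "g \<in> ?B" and h: "h = (\<lambda>x. if x \<in> T then S else g x)" by auto
      have gv: "\<And>x. x \<in> D - T \<Longrightarrow> g x < S" and gx: "\<And>x. x \<notin> D - T \<Longrightarrow> g x = undefined"
        and gf: "\<And>j. j < S \<Longrightarrow> card {x\<in>D - T. g x = j} = r j"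
        using g by (auto simp: deals_def PiE_def extensional_def)
      have hT: "{x\<in>D. h x = S} = T" using T gv by (auto simp: h)
      have "h \<in> D \<rightarrow>\<^sub>E {..<Suc S}"
        using gv gx T by (auto simp: h PiE_def extensional_def less_Suc_eq)
      moreover have "\<forall>j<Suc S. card {x\<in>D. h x = j} = r j"
      proof (intro allI impI)
        fix j assume j: "j < Suc S"
        show "card {x\<in>D. h x = j} = r j"
        proof (cases "j = S")
          case True thus ?thesis using hT T by simp
        next
          case False
          hence "{x\<in>D. h x = j} = {x\<in>D - T. g x = j}" by (auto simp: h)
          thus ?thesis using gf j False by simp
        qed
      qed
      ultimately show "h \<in> ?A" using hT by (simp add: deals_def)
    qed
  qed
  thus ?thesis by (rule bij_betw_same_card)
qed

lemma deals_card:
  "finite D \<Longrightarrow> (\<Sum>j<S. r j) = card D \<Longrightarrow>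
   card (deals S D r) * (\<Prod>j<S. fact (r j)) = fact (card D)"
proof (induction S arbitrary: D)
  case 0
  then show ?case by (simp add: deals_def)
next
  case (Suc S)
  let ?Ts = "{T. T \<subseteq> D \<and> card T = r S}"
  have fT: "finite ?Ts" using Suc.prems(1) by simp
  have img: "(\<lambda>f. {x\<in>D. f x = S}) ` deals (Suc S) D r \<subseteq> ?Ts"
    by (auto simp: deals_def)
  have "card (deals (Suc S) D r) = (\<Sum>T\<in>?Ts. card {f \<in> deals (Suc S) D r. {x\<in>D. f x = S} = T})"
    using sum.group[OF finite_deals[OF Suc.prems(1)] fT img, of "\<lambda>_. 1::nat"] by simp
  also have "\<dots> = (\<Sum>T\<in>?Ts. card (deals S (D - T) r))"
    by (rule sum.cong) (auto intro!: deals_fiber_card Suc.prems(1))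
  finally have c: "card (deals (Suc S) D r) = (\<Sum>T\<in>?Ts. card (deals S (D - T) r))" .
  have rS: "r S \<le> card D" using Suc.prems(2) by simp
  have IH: "card (deals S (D - T) r) * (\<Prod>j<S. fact (r j)) = fact (card D - r S)" if "T \<in> ?Ts" for T
  proof -
    have "card (D - T) = card D - r S" using that Suc.prems(1)
      by (metis (mono_tags, lifting) card_Diff_subset finite_subset mem_Collect_eq)
    moreover have "(\<Sum>j<S. r j) = card D - r S" using Suc.prems(2) by simp
    ultimately show ?thesis using Suc.IH[of "D - T"] Suc.prems(1) by simp
  qed
  have "card (deals (Suc S) D r) * (\<Prod>j<S. fact (r j)) = (\<Sum>T\<in>?Ts. fact (card D - r S))"
    unfolding c sum_distrib_right using IH by (intro sum.cong) auto
  also have "\<dots> = (card D choose r S) * fact (card D - r S)"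
    using n_subsets[OF Suc.prems(1)] by simp
  finally have "card (deals (Suc S) D r) * (\<Prod>j<S. fact (r j)) * fact (r S) = fact (r S) * fact (card D - r S) * (card D choose r S)"
    by simp
  also have "\<dots> = fact (card D)" using binomial_fact_lemma[OF rS] .
  finally show ?case by (simp add: ac_simps)
qed

definition ders :: "nat \<Rightarrow> (nat \<times> nat) set \<Rightarrow> (nat \<Rightarrow> nat) \<Rightarrow> ((nat \<times> nat) \<Rightarrow> nat) set" where
  "ders S D r = {f \<in> deals S D r. \<forall>x\<in>D. f x \<noteq> fst x}"

lemma E_ders: "E S n = card (ders S (Sigma {..<S} (\<lambda>j. {..<n j})) n)"
proof -
  have "cards S n = Sigma {..<S} (\<lambda>j. {..<n j})" by (auto simp: cards_def)
  thus ?thesis by (simp add: E_def block_derangements_def ders_def deals_def)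
qed

lemma E_cong: "(\<forall>j<S. n j = n' j) \<Longrightarrow> E S n = E S n'"
proof -
  assume a: "\<forall>j<S. n j = n' j"
  have "Sigma {..<S} (\<lambda>j. {..<n j}) = Sigma {..<S} (\<lambda>j. {..<n' j})" using a by auto
  moreover have "ders S X n = ders S X n'" for X using a by (auto simp: ders_def deals_def)
  ultimately show ?thesis by (simp add: E_ders)
qed

lemma ders_relabel:
  assumes h: "bij_betw h D D'" and hf: "\<forall>x\<in>D. fst (h x) = fst x"
  shows "card (ders S D r) = card (ders S D' r)"
proof -
  let ?i = "inv_into D h"
  have i1: "\<And>x. x \<in> D \<Longrightarrow> ?i (h x) = x" using h by (simp add: bij_betw_def)
  have i2: "\<And>y. y \<in> D' \<Longrightarrow> h (?i y) = y \<and> ?i y \<in> D" using h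
    by (metis bij_betw_def bij_betw_inv_into_right inv_into_into)
  have hD: "\<And>x. x \<in> D \<Longrightarrow> h x \<in> D'" using h by (auto simp: bij_betw_def)
  have inj: "inj_on h D" using h by (simp add: bij_betw_def)
  have fib: "{y\<in>D'. f (?i y) = j} = h ` {x\<in>D. f x = j}" for f j
  proof (rule set_eqI, rule iffI)
    fix y assume "y \<in> {y\<in>D'. f (?i y) = j}"
    thus "y \<in> h ` {x\<in>D. f x = j}" using i2[of y] by (intro image_eqI[where x="?i y"]) auto
  next
    fix y assume "y \<in> h ` {x\<in>D. f x = j}"
    thus "y \<in> {y\<in>D'. f (?i y) = j}" using i1 hD by auto
  qed
  have fib2: "{x\<in>D. g (h x) = j} = ?i ` {y\<in>D'. g y = j}" for g j
  proof (rule set_eqI, rule iffI)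
    fix x assume "x \<in> {x\<in>D. g (h x) = j}"
    thus "x \<in> ?i ` {y\<in>D'. g y = j}" using i1[of x] hD[of x] by (intro image_eqI[where x="h x"]) auto
  next
    fix x assume "x \<in> ?i ` {y\<in>D'. g y = j}"
    thus "x \<in> {x\<in>D. g (h x) = j}" using i2 by auto
  qed
  have inj2: "inj_on ?i D'" using i2 by (metis inj_on_inverseI)
  have "bij_betw (\<lambda>f y. if y \<in> D' then f (?i y) else undefined) (ders S D r) (ders S D' r)"
  proof (rule bij_betw_byWitness[where f'="\<lambda>g x. if x \<in> D then g (h x) else undefined"])
    show "\<forall>a\<in>ders S D r. (\<lambda>x. if x \<in> D then (if h x \<in> D' then a (?i (h x)) else undefined) else undefined) = a"
      using i1 hD by (auto simp: ders_def deals_def PiE_def extensional_def fun_eq_iff)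
    show "\<forall>a\<in>ders S D' r. (\<lambda>y. if y \<in> D' then (if ?i y \<in> D then a (h (?i y)) else undefined) else undefined) = a"
      using i2 by (auto simp: ders_def deals_def PiE_def extensional_def fun_eq_iff)
    show "(\<lambda>f y. if y \<in> D' then f (?i y) else undefined) ` ders S D r \<subseteq> ders S D' r"
    proof safe
      fix f assume f: "f \<in> ders S D r"
      have fv: "\<And>x. x \<in> D \<Longrightarrow> f x < S" and ff: "\<And>j. j < S \<Longrightarrow> card {x\<in>D. f x = j} = r j"
        and fd: "\<And>x. x \<in> D \<Longrightarrow> f x \<noteq> fst x"
        using f by (auto simp: ders_def deals_def PiE_def)
      let ?f = "\<lambda>y. if y \<in> D' then f (?i y) else undefined"
      have c: "{y\<in>D'. ?f y = j} = {y\<in>D'. f (?i y) = j}" for j by auto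
      have "\<forall>y\<in>D'. f (?i y) < S" using fv i2 by blast
      hence "?f \<in> D' \<rightarrow>\<^sub>E {..<S}" by auto
      moreover have "\<forall>j<S. card {y\<in>D'. ?f y = j} = r j"
        unfolding c fib using ff card_image[OF inj_on_subset[OF inj]] by auto
      moreover have "\<forall>y\<in>D'. ?f y \<noteq> fst y"
      proof
        fix y assume y: "y \<in> D'"
        have "fst y = fst (?i y)" using i2[OF y] hf by metis
        thus "?f y \<noteq> fst y" using y i2[OF y] fd by auto
      qed
      ultimately show "?f \<in> ders S D' r" by (simp add: ders_def deals_def)
    qed
    show "(\<lambda>g x. if x \<in> D then g (h x) else undefined) ` ders S D' r \<subseteq> ders S D r"
    proof safe
      fix g assume g: "g \<in> ders S D' r"
      have gv: "\<And>x. x \<in> D' \<Longrightarrow> g x < S" and gf: "\<And>j. j < S \<Longrightarrow> card {x\<in>D'. g x = j} = r j"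
        and gd: "\<And>x. x \<in> D' \<Longrightarrow> g x \<noteq> fst x"
        using g by (auto simp: ders_def deals_def PiE_def)
      let ?g = "\<lambda>x. if x \<in> D then g (h x) else undefined"
      have c: "{x\<in>D. ?g x = j} = {x\<in>D. g (h x) = j}" for j by auto
      have "\<forall>x\<in>D. g (h x) < S" using gv hD by blast
      hence "?g \<in> D \<rightarrow>\<^sub>E {..<S}" by auto
      moreover have "\<forall>j<S. card {x\<in>D. ?g x = j} = r j"
        unfolding c fib2 using gf card_image[OF inj_on_subset[OF inj2]] by auto
      moreover have "\<forall>x\<in>D. ?g x \<noteq> fst x"
      proof
        fix x assume x: "x \<in> D"
        have "g (h x) \<noteq> fst (h x)" using gd hD x by blast
        thus "?g x \<noteq> fst x" using x hf by simp
      qed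
      ultimately show "?g \<in> ders S D r" by (simp add: ders_def deals_def)
    qed
  qed
  thus ?thesis by (rule bij_betw_same_card)
qed

lemma bij_Sigma:
  assumes "\<forall>j\<in>I. bij_betw (g j) (A j) (M j)"
  shows "bij_betw (\<lambda>(j,c). (j, g j c)) (Sigma I A) (Sigma I M)"
proof -
  have l: "\<forall>j\<in>I. \<forall>c\<in>A j. inv_into (A j) (g j) (g j c) = c"
    using assms by (metis bij_betw_inv_into_left)
  have r: "\<forall>j\<in>I. \<forall>y\<in>M j. g j (inv_into (A j) (g j) y) = y"
    using assms by (metis bij_betw_inv_into_right)
  have i1: "\<forall>j\<in>I. \<forall>c\<in>A j. g j c \<in> M j" using assms by (meson bij_betwE)
  have i2: "\<forall>j\<in>I. \<forall>y\<in>M j. inv_into (A j) (g j) y \<in> A j"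
    using assms by (meson bij_betwE bij_betw_inv_into)
  show ?thesis
    by (rule bij_betw_byWitness[where f'="\<lambda>(j,y). (j, inv_into (A j) (g j) y)"])
       (use l r i1 i2 in auto)
qed

lemma E_Sigma:
  assumes fin: "\<forall>j<S. finite (M j)"
  shows "card (ders S (Sigma {..<S} M) (\<lambda>j. card (M j))) = E S (\<lambda>j. card (M j))"
proof -
  have "\<forall>j\<in>{..<S}. \<exists>g. bij_betw g {..<card (M j)} (M j)"
    using fin ex_bij_betw_nat_finite by (metis atLeast0LessThan lessThan_iff)
  then obtain g where g: "\<forall>j\<in>{..<S}. bij_betw (g j) {..<card (M j)} (M j)" by metis
  have "card (ders S (Sigma {..<S} (\<lambda>j. {..<card (M j)})) (\<lambda>j. card (M j))) =
        card (ders S (Sigma {..<S} M) (\<lambda>j. card (M j)))"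
    by (rule ders_relabel[OF bij_Sigma[OF g]]) auto
  thus ?thesis by (simp add: E_ders)
qed

lemma fiber_split:
  fixes S :: nat and l :: "nat \<Rightarrow> nat" and f :: "nat \<times> nat \<Rightarrow> nat"
  assumes M: "\<forall>j<S. M j \<subseteq> {..<l j}" and j: "j < S"
    and fx: "\<forall>x\<in>Sigma {..<S} (\<lambda>j. {..<l j}) - Sigma {..<S} M. f x = fst x"
  shows "card {x \<in> Sigma {..<S} (\<lambda>j. {..<l j}). f x = j}
       = card {x\<in>Sigma {..<S} M. f x = j} + (l j - card (M j))"
proof -
  let ?C = "Sigma {..<S} (\<lambda>j. {..<l j})" and ?DM = "Sigma {..<S} M"
  have DMC: "?DM \<subseteq> ?C" using M by auto
  have fC: "finite ?C" by (rule finite_SigmaI) auto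
  have eq: "{x \<in> ?C. f x = j} = {x\<in>?DM. f x = j} \<union> Pair j ` ({..<l j} - M j)"
  proof (rule set_eqI, rule iffI)
    fix x assume x: "x \<in> {x \<in> ?C. f x = j}"
    show "x \<in> {x\<in>?DM. f x = j} \<union> Pair j ` ({..<l j} - M j)"
    proof (cases "x \<in> ?DM")
      case True thus ?thesis using x by auto
    next
      case False
      hence "f x = fst x" using fx x by auto
      thus ?thesis using x False by (cases x) auto
    qed
  next
    fix x assume x: "x \<in> {x\<in>?DM. f x = j} \<union> Pair j ` ({..<l j} - M j)"
    thus "x \<in> {x \<in> ?C. f x = j}"
    proof
      assume "x \<in> {x\<in>?DM. f x = j}" thus ?thesis using DMC by auto
    next
      assume "x \<in> Pair j ` ({..<l j} - M j)"
      then obtain c where c: "c < l j" "c \<notin> M j" "x = (j, c)" by auto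
      hence "x \<in> ?C - ?DM" using j by auto
      hence "f x = j" using fx c by auto
      thus ?thesis using c j by auto
    qed
  qed
  have fin1: "finite {x\<in>?DM. f x = j}" using DMC fC by (auto intro: finite_subset)
  have disj: "{x\<in>?DM. f x = j} \<inter> Pair j ` ({..<l j} - M j) = {}" by auto
  have "card (Pair j ` ({..<l j} - M j)) = card ({..<l j} - M j)"
    by (rule card_image) (auto simp: inj_on_def)
  also have "\<dots> = l j - card (M j)"
    using M j by (subst card_Diff_subset) (auto intro: finite_subset)
  finally have c2: "card (Pair j ` ({..<l j} - M j)) = l j - card (M j)" .
  have "card {x \<in> ?C. f x = j} = card ({x\<in>?DM. f x = j} \<union> Pair j ` ({..<l j} - M j))"
    using eq by simp
  also have "\<dots> = card {x\<in>?DM. f x = j} + card (Pair j ` ({..<l j} - M j))"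
    by (rule card_Un_disjoint[OF fin1 _ disj]) auto
  finally show ?thesis using c2 by simp
qed

definition mv :: "nat \<Rightarrow> (nat \<Rightarrow> nat) \<Rightarrow> ((nat \<times> nat) \<Rightarrow> nat) \<Rightarrow> nat \<Rightarrow> nat set" where
  "mv S l f = restrict (\<lambda>j. {c\<in>{..<l j}. f (j,c) \<noteq> j}) {..<S}"

lemma fiber_M:
  fixes l :: "nat \<Rightarrow> nat"
  assumes Mp: "M \<in> Pi\<^sub>E {..<S} (\<lambda>j. Pow {..<l j})"
  shows "card {f \<in> deals S (Sigma {..<S} (\<lambda>j. {..<l j})) l. mv S l f = M}
       = card (ders S (Sigma {..<S} M) (\<lambda>j. card (M j)))"
proof -
  let ?C = "Sigma {..<S} (\<lambda>j. {..<l j})" and ?DM = "Sigma {..<S} M"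
  let ?A = "{f \<in> deals S ?C l. mv S l f = M}" and ?B = "ders S ?DM (\<lambda>j. card (M j))"
  let ?ext = "\<lambda>g x. if x \<in> ?DM then g x else if x \<in> ?C then fst x else undefined"
  have M: "\<forall>j<S. M j \<subseteq> {..<l j}" using Mp by auto
  have Mu: "\<And>j. j \<ge> S \<Longrightarrow> M j = undefined" using Mp by (auto simp: PiE_def extensional_def)
  have fM: "\<forall>j<S. finite (M j)" using M by (auto intro: finite_subset)
  have cM: "\<And>j. j < S \<Longrightarrow> card (M j) \<le> l j" using M by (metis card_lessThan card_mono finite_lessThan)
  have DMC: "?DM \<subseteq> ?C" using M by auto
  have Afacts: "(\<forall>x\<in>?C - ?DM. f x = fst x) \<and> (\<forall>x\<in>?DM. f x \<noteq> fst x)" if f: "f \<in> ?A" for f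
  proof -
    have Mj: "M j = {c\<in>{..<l j}. f (j,c) \<noteq> j}" if "j < S" for j
      using f that unfolding mv_def by (auto dest!: fun_cong[where x=j])
    show ?thesis
    proof (intro conjI ballI)
      fix x assume x: "x \<in> ?C - ?DM"
      then obtain j c where "x = (j,c)" "j < S" "c < l j" "c \<notin> M j" by auto
      thus "f x = fst x" using Mj by auto
    next
      fix x assume x: "x \<in> ?DM"
      then obtain j c where "x = (j,c)" "j < S" "c \<in> M j" by auto
      thus "f x \<noteq> fst x" using Mj by auto
    qed
  qed
  have "bij_betw (\<lambda>f. restrict f ?DM) ?A ?B"
  proof (rule bij_betw_byWitness[where f'="?ext"])
    show "\<forall>f\<in>?A. ?ext (restrict f ?DM) = f"
    proof
      fix f assume f: "f \<in> ?A"
      have fu: "\<And>x. x \<notin> ?C \<Longrightarrow> f x = undefined" using f by (auto simp: deals_def PiE_def extensional_def)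
      show "?ext (restrict f ?DM) = f"
      proof
        fix x show "?ext (restrict f ?DM) x = f x"
          using Afacts[OF f] fu by auto
      qed
    qed
    show "\<forall>g\<in>?B. restrict (?ext g) ?DM = g"
      by (auto simp: ders_def deals_def PiE_def extensional_def fun_eq_iff)
    show "(\<lambda>f. restrict f ?DM) ` ?A \<subseteq> ?B"
    proof (rule image_subsetI)
      fix f assume f: "f \<in> ?A"
      have fv: "\<And>x. x \<in> ?C \<Longrightarrow> f x < S" and ff: "\<And>j. j < S \<Longrightarrow> card {x\<in>?C. f x = j} = l j"
        using f by (auto simp: deals_def PiE_def)
      have "restrict f ?DM \<in> ?DM \<rightarrow>\<^sub>E {..<S}" using fv DMC by auto
      moreover have "\<forall>j<S. card {x\<in>?DM. restrict f ?DM x = j} = card (M j)"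
      proof (intro allI impI)
        fix j assume j: "j < S"
        have "{x\<in>?DM. restrict f ?DM x = j} = {x\<in>?DM. f x = j}" by auto
        moreover have "card {x\<in>?C. f x = j} = card {x\<in>?DM. f x = j} + (l j - card (M j))"
          using fiber_split[OF M j] Afacts[OF f] by blast
        ultimately show "card {x\<in>?DM. restrict f ?DM x = j} = card (M j)"
          using ff[OF j] cM[OF j] by simp
      qed
      moreover have "\<forall>x\<in>?DM. restrict f ?DM x \<noteq> fst x" using Afacts[OF f] by simp
      ultimately show "restrict f ?DM \<in> ?B" by (simp add: ders_def deals_def)
    qed
    show "?ext ` ?B \<subseteq> ?A"
    proof (rule image_subsetI)
      fix g assume g: "g \<in> ?B"
      have gv: "\<And>x. x \<in> ?DM \<Longrightarrow> g x < S" and gf: "\<And>j. j < S \<Longrightarrow> card {x\<in>?DM. g x = j} = card (M j)"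
        and gd: "\<And>x. x \<in> ?DM \<Longrightarrow> g x \<noteq> fst x"
        using g by (auto simp: ders_def deals_def PiE_def)
      have "?ext g \<in> ?C \<rightarrow>\<^sub>E {..<S}" using gv DMC by (auto simp: PiE_def extensional_def)
      moreover have "\<forall>j<S. card {x\<in>?C. ?ext g x = j} = l j"
      proof (intro allI impI)
        fix j assume j: "j < S"
        have "{x\<in>?DM. ?ext g x = j} = {x\<in>?DM. g x = j}" by auto
        moreover have "card {x\<in>?C. ?ext g x = j} = card {x\<in>?DM. ?ext g x = j} + (l j - card (M j))"
          by (rule fiber_split[OF M j]) auto
        ultimately show "card {x\<in>?C. ?ext g x = j} = l j"
          using gf[OF j] cM[OF j] by simp
      qed
      moreover have "mv S l (?ext g) = M"
      proof
        fix j show "mv S l (?ext g) j = M j"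
        proof (cases "j < S")
          case False thus ?thesis using Mu by (simp add: mv_def)
        next
          case True
          have "{c\<in>{..<l j}. ?ext g (j,c) \<noteq> j} = M j"
          proof (rule set_eqI, rule iffI)
            fix c assume "c \<in> {c\<in>{..<l j}. ?ext g (j,c) \<noteq> j}"
            thus "c \<in> M j" using True by (auto split: if_splits)
          next
            fix c assume c: "c \<in> M j"
            hence "(j,c) \<in> ?DM" using True by auto
            thus "c \<in> {c\<in>{..<l j}. ?ext g (j,c) \<noteq> j}" using gd[of "(j,c)"] c M True by auto
          qed
          thus ?thesis using True by (simp add: mv_def)
        qed
      qed
      ultimately show "?ext g \<in> ?A" by (simp add: deals_def)
    qed
  qed
  thus ?thesis by (rule bij_betw_same_card)
qed

lemma lemmaA:
  fixes l :: "nat \<Rightarrow> nat"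
  shows "card (deals S (Sigma {..<S} (\<lambda>j. {..<l j})) l)
   = (\<Sum>M\<in>Pi\<^sub>E {..<S} (\<lambda>j. Pow {..<l j}). E S (\<lambda>j. card (M j)))"
proof -
  let ?C = "Sigma {..<S} (\<lambda>j. {..<l j})" and ?Ms = "Pi\<^sub>E {..<S} (\<lambda>j. Pow {..<l j})"
  have fC: "finite ?C" by (rule finite_SigmaI) auto
  have fMs: "finite ?Ms" by (auto intro: finite_PiE)
  have img: "mv S l ` deals S ?C l \<subseteq> ?Ms" by (auto simp: mv_def)
  have "card (deals S ?C l) = (\<Sum>M\<in>?Ms. card {f \<in> deals S ?C l. mv S l f = M})"
    using sum.group[OF finite_deals[OF fC] fMs img, of "\<lambda>_. 1::nat"] by simp
  also have "\<dots> = (\<Sum>M\<in>?Ms. E S (\<lambda>j. card (M j)))"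
  proof (rule sum.cong[OF refl])
    fix M assume M: "M \<in> ?Ms"
    have "\<forall>j<S. finite (M j)" using M by (auto intro: finite_subset)
    thus "card {f \<in> deals S ?C l. mv S l f = M} = E S (\<lambda>j. card (M j))"
      using fiber_M[OF M] E_Sigma by simp
  qed
  finally show ?thesis .
qed

lemma lemmaA2:
  fixes l :: "nat \<Rightarrow> nat"
  shows "(\<Sum>M\<in>Pi\<^sub>E {..<S} (\<lambda>j. Pow {..<l j}). E S (\<lambda>j. card (M j)))
       = (\<Sum>k\<in>Pi\<^sub>E {..<S} (\<lambda>j. {..l j}). (\<Prod>j<S. l j choose k j) * E S k)"
proof -
  let ?Ms = "Pi\<^sub>E {..<S} (\<lambda>j. Pow {..<l j})" and ?K = "Pi\<^sub>E {..<S} (\<lambda>j. {..l j})"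
  let ?g = "\<lambda>M. restrict (\<lambda>j. card (M j)) {..<S}"
  have fMs: "finite ?Ms" by (auto intro: finite_PiE)
  have fK: "finite ?K" by (auto intro: finite_PiE)
  have img: "?g ` ?Ms \<subseteq> ?K"
  proof (rule image_subsetI)
    fix M assume "M \<in> ?Ms"
    hence "\<forall>j<S. card (M j) \<le> l j" by (metis PiE_mem Pow_iff card_lessThan card_mono finite_lessThan lessThan_iff)
    thus "?g M \<in> ?K" by auto
  qed
  have "(\<Sum>M\<in>?Ms. E S (\<lambda>j. card (M j))) = (\<Sum>k\<in>?K. \<Sum>M\<in>{M\<in>?Ms. ?g M = k}. E S (\<lambda>j. card (M j)))"
    using sum.group[OF fMs fK img, of "\<lambda>M. E S (\<lambda>j. card (M j))"] by simp
  also have "\<dots> = (\<Sum>k\<in>?K. (\<Prod>j<S. l j choose k j) * E S k)"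
  proof (rule sum.cong[OF refl])
    fix k assume k: "k \<in> ?K"
    have s1: "(\<Sum>M\<in>{M\<in>?Ms. ?g M = k}. E S (\<lambda>j. card (M j))) = (\<Sum>M\<in>{M\<in>?Ms. ?g M = k}. E S k)"
    proof (rule sum.cong[OF refl])
      fix M assume "M \<in> {M\<in>?Ms. ?g M = k}"
      hence "\<forall>j<S. card (M j) = k j" by (auto dest!: fun_cong)
      thus "E S (\<lambda>j. card (M j)) = E S k" by (rule E_cong)
    qed
    have s2: "{M\<in>?Ms. ?g M = k} = Pi\<^sub>E {..<S} (\<lambda>j. {B. B \<subseteq> {..<l j} \<and> card B = k j})"
    proof (rule set_eqI, rule iffI)
      fix M assume M: "M \<in> {M\<in>?Ms. ?g M = k}"
      hence "\<forall>j<S. card (M j) = k j" by (auto dest!: fun_cong)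
      thus "M \<in> Pi\<^sub>E {..<S} (\<lambda>j. {B. B \<subseteq> {..<l j} \<and> card B = k j})" using M by (auto simp: PiE_def)
    next
      fix M assume M: "M \<in> Pi\<^sub>E {..<S} (\<lambda>j. {B. B \<subseteq> {..<l j} \<and> card B = k j})"
      have "?g M = k"
      proof
        fix j show "?g M j = k j" using M k by (cases "j < S") (auto simp: PiE_def extensional_def)
      qed
      thus "M \<in> {M\<in>?Ms. ?g M = k}" using M by (auto simp: PiE_def)
    qed
    have s3: "card (Pi\<^sub>E {..<S} (\<lambda>j. {B. B \<subseteq> {..<l j} \<and> card B = k j})) = (\<Prod>j<S. l j choose k j)"
      by (simp add: card_PiE n_subsets)
    show "(\<Sum>M\<in>{M\<in>?Ms. ?g M = k}. E S (\<lambda>j. card (M j))) = (\<Prod>j<S. l j choose k j) * E S k"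
      unfolding s1 using s2 s3 by simp
  qed
  finally show ?thesis .
qed

definition G :: "nat \<Rightarrow> (nat \<Rightarrow> nat) \<Rightarrow> nat" where
  "G S l = card (deals S (Sigma {..<S} (\<lambda>j. {..<l j})) l)"

lemma G_fact: "G S l * (\<Prod>j<S. fact (l j)) = fact (\<Sum>j<S. l j)"
proof -
  have c: "card (Sigma {..<S} (\<lambda>j. {..<l j})) = (\<Sum>j<S. l j)" by (simp add: card_SigmaI)
  have "finite (Sigma {..<S} (\<lambda>j. {..<l j}))" by (rule finite_SigmaI) auto
  from deals_card[OF this c[symmetric]] show ?thesis unfolding G_def c .
qed

lemma G_sum:
  assumes l: "l \<in> Pi\<^sub>E {..<S} (\<lambda>j. {..<m j})"
  shows "G S l = (\<Sum>k\<in>Pi\<^sub>E {..<S} (\<lambda>j. {..<m j}). (\<Prod>j<S. l j choose k j) * E S k)"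
proof -
  have "G S l = (\<Sum>k\<in>Pi\<^sub>E {..<S} (\<lambda>j. {..l j}). (\<Prod>j<S. l j choose k j) * E S k)"
    unfolding G_def lemmaA lemmaA2 ..
  also have "\<dots> = (\<Sum>k\<in>Pi\<^sub>E {..<S} (\<lambda>j. {..<m j}). (\<Prod>j<S. l j choose k j) * E S k)"
  proof (rule sum.mono_neutral_left)
    show "finite (Pi\<^sub>E {..<S} (\<lambda>j. {..<m j}))" by (auto intro: finite_PiE)
    show "Pi\<^sub>E {..<S} (\<lambda>j. {..l j}) \<subseteq> Pi\<^sub>E {..<S} (\<lambda>j. {..<m j})"
      using l by (auto simp: PiE_def Pi_def) (meson le_less_trans lessThan_iff)
    show "\<forall>k\<in>Pi\<^sub>E {..<S} (\<lambda>j. {..<m j}) - Pi\<^sub>E {..<S} (\<lambda>j. {..l j}). (\<Prod>j<S. l j choose k j) * E S k = 0"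
    proof
      fix k assume k: "k \<in> Pi\<^sub>E {..<S} (\<lambda>j. {..<m j}) - Pi\<^sub>E {..<S} (\<lambda>j. {..l j})"
      then obtain j where j: "j < S" "\<not> k j \<le> l j" by (auto simp: PiE_def Pi_def)
      hence "l j choose k j = 0" by simp
      hence "(\<Prod>j<S. l j choose k j) = 0" using j by (intro prod_zero bexI[of _ j]) auto
      thus "(\<Prod>j<S. l j choose k j) * E S k = 0" by simp
    qed
  qed
  finally show ?thesis .
qed

lemma sum_choose_lt: "m > 0 \<Longrightarrow> (\<Sum>i<m. i choose k) = m choose Suc k"
  by (cases m) (simp_all add: lessThan_Suc_atMost sum_choose_upper)

theorem mainTheorem10:
  fixes S :: nat and m :: "nat \<Rightarrow> nat"
  assumes "\<forall>j<S. m j > 0"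
  shows "real (B S m) =
    (\<Sum>l \<in> Pi\<^sub>E {..<S} (\<lambda>j. {..<m j}).
        fact (\<Sum>j<S. l j) / (\<Prod>j<S. fact (l j)))"
proof -
  let ?L = "Pi\<^sub>E {..<S} (\<lambda>j. {..<m j})"
  have fL: "finite ?L" by (auto intro: finite_PiE)
  have "(\<Sum>l\<in>?L. G S l) = (\<Sum>l\<in>?L. \<Sum>k\<in>?L. (\<Prod>j<S. l j choose k j) * E S k)"
    by (rule sum.cong[OF refl]) (rule G_sum)
  also have "\<dots> = (\<Sum>k\<in>?L. \<Sum>l\<in>?L. (\<Prod>j<S. l j choose k j) * E S k)"
    by (rule sum.swap)
  also have "\<dots> = (\<Sum>k\<in>?L. (\<Prod>j<S. m j choose Suc (k j)) * E S k)"
  proof (rule sum.cong[OF refl])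
    fix k assume k: "k \<in> ?L"
    have "(\<Sum>l\<in>?L. \<Prod>j<S. l j choose k j) = (\<Prod>j<S. \<Sum>i<m j. i choose k j)"
      by (rule prod_sum_PiE[symmetric]) auto
    also have "\<dots> = (\<Prod>j<S. m j choose Suc (k j))"
      using assms by (intro prod.cong[OF refl]) (simp add: sum_choose_lt)
    finally have h: "(\<Sum>l\<in>?L. \<Prod>j<S. l j choose k j) = (\<Prod>j<S. m j choose Suc (k j))" .
    have "(\<Sum>l\<in>?L. (\<Prod>j<S. l j choose k j) * E S k) = (\<Sum>l\<in>?L. \<Prod>j<S. l j choose k j) * E S k"
      by (rule sum_distrib_right[symmetric])
    thus "(\<Sum>l\<in>?L. (\<Prod>j<S. l j choose k j) * E S k) = (\<Prod>j<S. m j choose Suc (k j)) * E S k"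
      using h by simp
  qed
  finally have SG: "(\<Sum>l\<in>?L. G S l) = (\<Sum>k\<in>?L. (\<Prod>j<S. m j choose Suc (k j)) * E S k)" .
  have bij: "bij_betw (\<lambda>k. restrict (\<lambda>j. Suc (k j)) {..<S}) ?L (Pi\<^sub>E {..<S} (\<lambda>j. {1..m j}))"
  proof (rule bij_betw_byWitness[where f'="\<lambda>k. restrict (\<lambda>j. k j - 1) {..<S}"])
    show "\<forall>a\<in>?L. restrict (\<lambda>j. restrict (\<lambda>j. Suc (a j)) {..<S} j - 1) {..<S} = a"
      by (auto simp: PiE_def extensional_def fun_eq_iff)
    show "\<forall>a\<in>Pi\<^sub>E {..<S} (\<lambda>j. {1..m j}). restrict (\<lambda>j. Suc (restrict (\<lambda>j. a j - 1) {..<S} j)) {..<S} = a"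
    proof (intro ballI ext)
      fix a j assume a: "a \<in> Pi\<^sub>E {..<S} (\<lambda>j. {1..m j})"
      show "restrict (\<lambda>j. Suc (restrict (\<lambda>j. a j - 1) {..<S} j)) {..<S} j = a j"
      proof (cases "j < S")
        case True
        hence "a j \<ge> 1" using PiE_mem[OF a, of j] by simp
        thus ?thesis using True by simp
      next
        case False thus ?thesis using a by (simp add: PiE_def extensional_def)
      qed
    qed
    show "(\<lambda>k. restrict (\<lambda>j. Suc (k j)) {..<S}) ` ?L \<subseteq> Pi\<^sub>E {..<S} (\<lambda>j. {1..m j})"
    proof (rule image_subsetI)
      fix k assume k: "k \<in> ?L"
      show "restrict (\<lambda>j. Suc (k j)) {..<S} \<in> Pi\<^sub>E {..<S} (\<lambda>j. {1..m j})"
        unfolding restrict_PiE_iff using PiE_mem[OF k] by (simp add: Suc_le_eq)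
    qed
    show "(\<lambda>k. restrict (\<lambda>j. k j - 1) {..<S}) ` Pi\<^sub>E {..<S} (\<lambda>j. {1..m j}) \<subseteq> ?L"
    proof (rule image_subsetI)
      fix k assume k: "k \<in> Pi\<^sub>E {..<S} (\<lambda>j. {1..m j})"
      have "\<forall>j<S. k j - 1 < m j"
      proof (intro allI impI)
        fix j assume "j < S"
        hence "1 \<le> k j" "k j \<le> m j" using PiE_mem[OF k, of j] by auto
        thus "k j - 1 < m j" by linarith
      qed
      thus "restrict (\<lambda>j. k j - 1) {..<S} \<in> ?L"
        unfolding restrict_PiE_iff by simp
    qed
  qed
  have "B S m = (\<Sum>k\<in>Pi\<^sub>E {..<S} (\<lambda>j. {1..m j}). (\<Prod>j<S. m j choose k j) * E S (\<lambda>j. k j - 1))"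
    unfolding B_def ..
  also have "\<dots> = (\<Sum>k\<in>?L. (\<Prod>j<S. m j choose restrict (\<lambda>j. Suc (k j)) {..<S} j) *
            E S (\<lambda>j. restrict (\<lambda>j. Suc (k j)) {..<S} j - 1))"
    by (rule sum.reindex_bij_betw[OF bij, symmetric])
  also have "\<dots> = (\<Sum>k\<in>?L. (\<Prod>j<S. m j choose Suc (k j)) * E S k)"
  proof (rule sum.cong[OF refl])
    fix k assume "k \<in> ?L"
    have "E S (\<lambda>j. restrict (\<lambda>j. Suc (k j)) {..<S} j - 1) = E S k" by (rule E_cong) auto
    moreover have "(\<Prod>j<S. m j choose restrict (\<lambda>j. Suc (k j)) {..<S} j) = (\<Prod>j<S. m j choose Suc (k j))"
      by (rule prod.cong) auto
    ultimately show "(\<Prod>j<S. m j choose restrict (\<lambda>j. Suc (k j)) {..<S} j) * E S (\<lambda>j. restrict (\<lambda>j. Suc (k j)) {..<S} j - 1)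
       = (\<Prod>j<S. m j choose Suc (k j)) * E S k"
      by simp
  qed
  finally have BG: "B S m = (\<Sum>l\<in>?L. G S l)" using SG by simp
  have "real (G S l) = fact (\<Sum>j<S. l j) / (\<Prod>j<S. fact (l j))" for l
  proof -
    have "real (G S l) * (\<Prod>j<S. fact (l j)) = fact (\<Sum>j<S. l j)"
      using arg_cong[OF G_fact[of S l], of real] by (simp add: of_nat_prod)
    moreover have "(\<Prod>j<S. fact (l j) :: real) \<noteq> 0" by simp
    ultimately show ?thesis by (simp add: field_simps)
  qed
  thus ?thesis unfolding BG by simp
qed

end
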